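(* Let $R$ be a commutative ring with identity whose set of zero-divisors $Z_R$ satisfies $Z_R\ne\{0\}$, and let $n>1$. Then the orthogonality graph $O(M_n(R))$ is connected and has diameter $3$ or $4$. Its diameter equals $3$ if and only if $$\forall a_0\in Z_R\ \ \exists a_1,a_2\in R\setminus\{0\}\ \ \forall i,j\in\{0,1,2\},\ i\ne j:\ a_ia_j=0.$$ Moreover, every vertex of $O(M_n(R))$ is at distance at most $2$ from some scalar matrix $bE$, $b\in R$, that is itself a vertex of $O(M_n(R))$.
   Context: All rings are associative with identity. For a commutative ring $R$, $Z_R=\{a\in R:\ ax=0\text{ for some }x\ne0\}$ is the set of zero-divisors (it contains $0$). For a ring $S$, an element $x$ is a two-sided zero-divisor if there exist nonzero $y,z\in S$ with $xy=0$ and $zx=0$. The orthogonality graph $O(S)$ is the undirected graph whose vertices are the nonzero two-sided zero-divisors of $S$, with distinct vertices $x,y$ adjacent iff $xy=yx=0$. Distance $d(x,y)$ is the minimal length of a path (infinite if none); the diameter is the supremum of all distances. $E$ denotes the identity matrix; $M_n(R)$ is the ring of $n\times n$ matrices over $R$. *)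

theory Defs
  imports "HOL-Analysis.Analysis" "HOL-Library.Extended_Nat"
begin

(* Zero-divisors of a commutative ring: Z_R = {a. a*x = 0 for some x \<noteq> 0} *)
definition zero_divisors :: "'a::comm_ring_1 set" where
  "zero_divisors = {a. \<exists>x. x \<noteq> 0 \<and> a * x = 0}"

(* Orthogonality graph of a ring S, given by its multiplication m (and 0).
   Vertices: nonzero two-sided zero-divisors. *)
definition orth_vertices :: "('b::zero \<Rightarrow> 'b \<Rightarrow> 'b) \<Rightarrow> 'b set" where
  "orth_vertices m = {x. x \<noteq> 0 \<and> (\<exists>y. y \<noteq> 0 \<and> m x y = 0) \<and> (\<exists>z. z \<noteq> 0 \<and> m z x = 0)}"

definition orth_adj :: "('b::zero \<Rightarrow> 'b \<Rightarrow> 'b) \<Rightarrow> 'b \<Rightarrow> 'b \<Rightarrow> bool" where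
  "orth_adj m x y \<longleftrightarrow> x \<in> orth_vertices m \<and> y \<in> orth_vertices m \<and> x \<noteq> y
      \<and> m x y = 0 \<and> m y x = 0"

(* a walk of length k from x to y in the orthogonality graph *)
definition orth_walk :: "('b::zero \<Rightarrow> 'b \<Rightarrow> 'b) \<Rightarrow> 'b \<Rightarrow> 'b \<Rightarrow> nat \<Rightarrow> bool" where
  "orth_walk m x y k \<longleftrightarrow> (\<exists>p :: nat \<Rightarrow> 'b. p 0 = x \<and> p k = y \<and>
      (\<forall>i<k. orth_adj m (p i) (p (Suc i))))"

(* distance: minimal length of a path, infinite if none *)
definition orth_dist :: "('b::zero \<Rightarrow> 'b \<Rightarrow> 'b) \<Rightarrow> 'b \<Rightarrow> 'b \<Rightarrow> enat" where
  "orth_dist m x y = (if \<exists>k. orth_walk m x y k then enat (LEAST k. orth_walk m x y k) else \<infinity>)"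

definition orth_connected :: "('b::zero \<Rightarrow> 'b \<Rightarrow> 'b) \<Rightarrow> bool" where
  "orth_connected m \<longleftrightarrow> (\<forall>x\<in>orth_vertices m. \<forall>y\<in>orth_vertices m. orth_dist m x y \<noteq> \<infinity>)"

(* diameter: supremum of all distances *)
definition orth_diam :: "('b::zero \<Rightarrow> 'b \<Rightarrow> 'b) \<Rightarrow> enat" where
  "orth_diam m = (SUP x\<in>orth_vertices m. SUP y\<in>orth_vertices m. orth_dist m x y)"

end

theory Submission imports Defs "Jordan_Normal_Form.Determinant" begin

definition subm :: "'a mat \<Rightarrow> nat list \<Rightarrow> nat list \<Rightarrow> 'a mat" where
  "subm A ps qs = mat (length ps) (length qs) (\<lambda>(a,b). A $$ (ps!a, qs!b))"

lemma subm_carrier[simp]: "subm A ps qs \<in> carrier_mat (length ps) (length qs)"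
  by (simp add: subm_def)

lemma subm_index[simp]: "a < length ps \<Longrightarrow> b < length qs \<Longrightarrow> subm A ps qs $$ (a,b) = A $$ (ps!a, qs!b)"
  by (simp add: subm_def)

lemma subm_dim[simp]: "dim_row (subm A ps qs) = length ps" "dim_col (subm A ps qs) = length qs"
  by (simp_all add: subm_def)

lemma sum_delta_nat: "(k::nat) < n \<Longrightarrow> (\<Sum>x\<in>{0..<n}. (if k = x then f x else 0)) = f k"
  by (simp add: sum.delta)

lemma subm_perm:
  fixes A :: "'a::comm_ring_1 mat"
  assumes A: "A \<in> carrier_mat n n" and l: "length ps = n" "length qs = n"
    and s: "set ps \<subseteq> {..<n}" "set qs \<subseteq> {..<n}"
  shows "subm A ps qs = mat n n (\<lambda>(a,k). if ps!a = k then 1 else 0) * A * mat n n (\<lambda>(l,b). if qs!b = l then 1 else 0)"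
proof -
  define P where "P = mat n n (\<lambda>(a,k). if ps!a = k then 1 else (0::'a))"
  define Q where "Q = mat n n (\<lambda>(l,b). if qs!b = l then 1 else (0::'a))"
  define PA where "PA = P * A"
  have PAc: "PA \<in> carrier_mat n n" unfolding PA_def P_def by (rule mult_carrier_mat[OF _ A]) simp
  have "subm A ps qs = PA * Q"
  proof (rule eq_matI)
    fix a b assume a: "a < dim_row (PA * Q)" and b: "b < dim_col (PA * Q)"
    have an: "a < n" and bn: "b < n" using a b PAc by (auto simp: Q_def)
    have pa: "ps!a < n" using s l an by (metis lessThan_iff nth_mem subsetD)
    have qb: "qs!b < n" using s l bn by (metis lessThan_iff nth_mem subsetD)
    have inner: "PA $$ (a,l) = A $$ (ps!a, l)" if ln: "l < n" for l
    proof -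
      have "PA $$ (a,l) = (\<Sum>i=0..<n. (if ps!a = i then 1 else 0) * A$$(i,l))"
        using A an ln by (simp add: scalar_prod_def PA_def P_def)
      also have "\<dots> = (\<Sum>i=0..<n. if ps!a = i then A$$(i,l) else 0)" by (intro sum.cong refl) simp
      also have "\<dots> = A $$ (ps!a, l)" using pa by simp
      finally show ?thesis .
    qed
    have "(PA * Q) $$ (a,b) = (\<Sum>l\<in>{0..<n}. PA $$ (a, l) * (if qs!b = l then 1 else 0))"
      using PAc an bn by (simp add: scalar_prod_def Q_def)
    also have "\<dots> = (\<Sum>l\<in>{0..<n}. if qs!b = l then A $$ (ps!a, l) else 0)" by (intro sum.cong refl) (simp add: inner)
    also have "\<dots> = A $$ (ps!a, qs!b)" using qb by simp
    finally show "subm A ps qs $$ (a,b) = (PA * Q) $$ (a,b)"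
      using an bn l by simp
  qed (use l PAc in \<open>simp_all add: Q_def\<close>)
  thus ?thesis by (simp add: PA_def P_def Q_def)
qed

lemma subm_full_killed:
  fixes A :: "'a::comm_ring_1 mat"
  assumes A: "A \<in> carrier_mat n n" and l: "length ps = n" "length qs = n"
    and s: "set ps \<subseteq> {..<n}" "set qs \<subseteq> {..<n}" and rd: "r * det A = 0"
  shows "r * det (subm A ps qs) = 0"
proof -
  define P where "P = mat n n (\<lambda>(a,k). if ps!a = k then 1 else (0::'a))"
  define Q where "Q = mat n n (\<lambda>(l,b). if qs!b = l then 1 else (0::'a))"
  have Pc: "P \<in> carrier_mat n n" and Qc: "Q \<in> carrier_mat n n" by (simp_all add: P_def Q_def)
  have PAc: "P * A \<in> carrier_mat n n" using Pc A by simp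
  have e: "subm A ps qs = P * A * Q" unfolding P_def Q_def by (rule subm_perm[OF assms(1-5)])
  have "det (P * A * Q) = det (P * A) * det Q" by (rule det_mult[OF PAc Qc])
  also have "det (P * A) = det P * det A" by (rule det_mult[OF Pc A])
  finally have "det (subm A ps qs) = det P * det A * det Q" using e by simp
  hence "r * det (subm A ps qs) = det P * (r * det A) * det Q" by (simp add: ac_simps)
  thus ?thesis using rd by simp
qed


lemma cofactor_cong_row:
  assumes "\<And>i' j'. i' < dim_row B - 1 \<Longrightarrow> j' < dim_col B - 1 \<Longrightarrow>
     B' $$ (if i' < a then i' else Suc i', if j' < b then j' else Suc j') = B $$ (if i' < a then i' else Suc i', if j' < b then j' else Suc j')"
    and "dim_row B' = dim_row B" "dim_col B' = dim_col B"
  shows "cofactor B' a b = cofactor B a b"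
proof -
  have "mat_delete B' a b = mat_delete B a b"
    by (rule eq_matI) (use assms in \<open>auto simp: mat_delete_def\<close>)
  thus ?thesis by (simp add: cofactor_def)
qed

lemma mccoy:
  fixes A :: "'a::comm_ring_1 mat"
  assumes A: "A \<in> carrier_mat n n" and r0: "r \<noteq> 0" and rd: "r * det A = 0"
  shows "\<exists>Y \<in> carrier_mat n n. r \<cdot>\<^sub>m Y \<noteq> 0\<^sub>m n n \<and> A * (r \<cdot>\<^sub>m Y) = 0\<^sub>m n n \<and> (r \<cdot>\<^sub>m Y) * A = 0\<^sub>m n n"
proof -
  define good where "good t = (\<exists>ps qs. length ps = t \<and> length qs = t \<and> set ps \<subseteq> {..<n} \<and> set qs \<subseteq> {..<n} \<and> r * det (subm A ps qs) \<noteq> 0)" for t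
  have g0: "good 0"
  proof -
    have "subm A [] [] = 1\<^sub>m 0" by (rule eq_matI) auto
    hence "det (subm A [] []) = 1" by simp
    thus ?thesis using r0 unfolding good_def by (intro exI[of _ "[]"]) auto
  qed
  have gn: "\<not> good n" unfolding good_def using subm_full_killed[OF A _ _ _ _ rd] by blast
  define S where "S = {t. t \<le> n \<and> good t}"
  have fS: "finite S" unfolding S_def by simp
  have S0: "0 \<in> S" using g0 by (simp add: S_def)
  define t where "t = Max S"
  have tS: "t \<in> S" using fS S0 unfolding t_def by (intro Max_in) auto
  hence tn: "t < n" and gt: "good t" using gn unfolding S_def by (auto simp: le_less)
  have ngt: "\<not> good (Suc t)"
  proof
    assume "good (Suc t)"
    hence "Suc t \<in> S" using tn by (simp add: S_def)
    hence "Suc t \<le> t" using fS unfolding t_def by (intro Max_ge)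
    thus False by simp
  qed
  have killed: "r * det (subm A ps' qs') = 0" if "length ps' = Suc t" "length qs' = Suc t" "set ps' \<subseteq> {..<n}" "set qs' \<subseteq> {..<n}" for ps' qs'
    using that ngt unfolding good_def by blast
  obtain ps qs where ps: "length ps = t" "set ps \<subseteq> {..<n}" and qs: "length qs = t" "set qs \<subseteq> {..<n}"
    and nz: "r * det (subm A ps qs) \<noteq> 0"
    using gt unfolding good_def by blast
  have dps: "distinct ps"
  proof (rule ccontr)
    assume "\<not> distinct ps"
    then obtain a b where ab: "a < t" "b < t" "a \<noteq> b" "ps!a = ps!b" using ps(1) by (auto simp: distinct_conv_nth)
    have "det (subm A ps qs) = 0"
      by (rule det_identical_rows[of _ t a b]) (use ab ps qs in \<open>auto intro!: eq_vecI\<close>)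
    thus False using nz by simp
  qed
  have dqs: "distinct qs"
  proof (rule ccontr)
    assume "\<not> distinct qs"
    then obtain a b where ab: "a < t" "b < t" "a \<noteq> b" "qs!a = qs!b" using qs(1) by (auto simp: distinct_conv_nth)
    have "det (subm A ps qs) = 0"
      by (rule det_identical_columns[of _ t a b]) (use ab ps qs in \<open>auto intro!: eq_vecI\<close>)
    thus False using nz by simp
  qed
  obtain i where i: "i < n" "i \<notin> set ps"
  proof -
    have "card (set ps) = t" using dps ps(1) by (simp add: distinct_card)
    hence "\<not> {..<n} \<subseteq> set ps" using tn by (metis card_lessThan card_mono finite_set not_le)
    thus ?thesis using that by blast
  qed
  obtain j where j: "j < n" "j \<notin> set qs"
  proof -
    have "card (set qs) = t" using dqs qs(1) by (simp add: distinct_card)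
    hence "\<not> {..<n} \<subseteq> set qs" using tn by (metis card_lessThan card_mono finite_set not_le)
    thus ?thesis using that by blast
  qed
  define pl where "pl = ps @ [i]"
  define ql where "ql = qs @ [j]"
  define B where "B = subm A pl ql"
  have lpl: "length pl = Suc t" and lql: "length ql = Suc t" using ps qs by (simp_all add: pl_def ql_def)
  have spl: "set pl \<subseteq> {..<n}" and sql: "set ql \<subseteq> {..<n}" using ps qs i j by (auto simp: pl_def ql_def)
  have pln: "pl!a < n" if "a < Suc t" for a using spl lpl that by (metis lessThan_iff nth_mem subsetD)
  have qln: "ql!b < n" if "b < Suc t" for b using sql lql that by (metis lessThan_iff nth_mem subsetD)
  have Bc: "B \<in> carrier_mat (Suc t) (Suc t)" unfolding B_def using subm_carrier[of A pl ql] lpl lql by simp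
  define Y where "Y = mat n n (\<lambda>(x,y). \<Sum>a<Suc t. \<Sum>b<Suc t. if ql!b = x \<and> pl!a = y then cofactor B a b else 0)"
  have Yc: "Y \<in> carrier_mat n n" by (simp add: Y_def)
  have K1: "r * (\<Sum>b<Suc t. A $$ (k, ql!b) * cofactor B a b) = 0" if k: "k < n" and a: "a < Suc t" for k a
  proof -
    define B' where "B' = subm A (pl[a:=k]) ql"
    have B'c: "B' \<in> carrier_mat (Suc t) (Suc t)" unfolding B'_def using subm_carrier[of A "pl[a:=k]" ql] lpl lql by simp
    have "r * det B' = 0" unfolding B'_def
      by (rule killed) (use lpl lql sql spl k set_update_subset_insert[of pl a k] in auto)
    moreover have "det B' = (\<Sum>b<Suc t. B' $$ (a,b) * cofactor B' a b)" by (rule laplace_expansion_row[OF B'c a])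
    moreover have "B' $$ (a,b) = A $$ (k, ql!b)" if "b < Suc t" for b
      using that a lpl lql by (simp add: B'_def)
    moreover have "cofactor B' a b = cofactor B a b" if "b < Suc t" for b
      by (rule cofactor_cong_row) (use lpl lql in \<open>auto simp: B'_def B_def\<close>)
    ultimately show ?thesis by simp
  qed
  have K2: "r * (\<Sum>a<Suc t. cofactor B a b * A $$ (pl!a, l)) = 0" if l: "l < n" and b: "b < Suc t" for l b
  proof -
    define B' where "B' = subm A pl (ql[b:=l])"
    have B'c: "B' \<in> carrier_mat (Suc t) (Suc t)" unfolding B'_def using subm_carrier[of A pl "ql[b:=l]"] lpl lql by simp
    have "r * det B' = 0" unfolding B'_def
      by (rule killed) (use lpl lql sql spl l set_update_subset_insert[of ql b l] in auto)
    moreover have "det B' = (\<Sum>a<Suc t. B' $$ (a,b) * cofactor B' a b)" by (rule laplace_expansion_column[OF B'c b])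
    moreover have "B' $$ (a,b) = A $$ (pl!a, l)" if "a < Suc t" for a
      using that b lpl lql by (simp add: B'_def)
    moreover have "cofactor B' a b = cofactor B a b" if "a < Suc t" for a
      by (rule cofactor_cong_row) (use lpl lql in \<open>auto simp: B'_def B_def\<close>)
    ultimately show ?thesis by (simp add: mult.commute)
  qed
  have AY: "A * (r \<cdot>\<^sub>m Y) = 0\<^sub>m n n"
  proof (rule eq_matI)
    fix k y assume "k < dim_row (0\<^sub>m n n :: 'a mat)" "y < dim_col (0\<^sub>m n n :: 'a mat)"
    hence k: "k < n" and y: "y < n" by auto
    define g where "g x a b = (if ql!b = x \<and> pl!a = y then cofactor B a b else 0)" for x a b
    have "(A * (r \<cdot>\<^sub>m Y)) $$ (k,y) = r * (A * Y) $$ (k,y)"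
      using A Yc k y by (simp add: mult_smult_distrib[OF A Yc])
    also have "(A * Y) $$ (k,y) = (\<Sum>x\<in>{0..<n}. A $$ (k,x) * (\<Sum>a<Suc t. \<Sum>b<Suc t. g x a b))"
      using A k y by (simp add: Y_def scalar_prod_def g_def)
    also have "\<dots> = (\<Sum>x\<in>{0..<n}. \<Sum>a<Suc t. \<Sum>b<Suc t. A $$ (k,x) * g x a b)"
      by (simp only: sum_distrib_left)
    also have "\<dots> = (\<Sum>a<Suc t. \<Sum>x\<in>{0..<n}. \<Sum>b<Suc t. A $$ (k,x) * g x a b)"
      by (rule sum.swap)
    also have "\<dots> = (\<Sum>a<Suc t. \<Sum>b<Suc t. \<Sum>x\<in>{0..<n}. A $$ (k,x) * g x a b)"
      by (intro sum.cong refl sum.swap)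
    also have "\<dots> = (\<Sum>a<Suc t. \<Sum>b<Suc t. if pl!a = y then A $$ (k, ql!b) * cofactor B a b else 0)"
    proof (intro sum.cong refl)
      fix a b assume "b \<in> {..<Suc t}"
      hence qb: "ql!b \<in> {0..<n}" using qln by auto
      have "(\<Sum>x\<in>{0..<n}. A $$ (k,x) * g x a b) = (\<Sum>x\<in>{0..<n}. if ql!b = x then (if pl!a = y then A $$ (k,x) * cofactor B a b else 0) else 0)"
        by (intro sum.cong refl) (simp add: g_def)
      also have "\<dots> = (if pl!a = y then A $$ (k, ql!b) * cofactor B a b else 0)"
        by (simp only: sum.delta'[OF finite_atLeastLessThan] qb if_True)
      finally show "(\<Sum>x\<in>{0..<n}. A $$ (k,x) * g x a b) = (if pl!a = y then A $$ (k, ql!b) * cofactor B a b else 0)" .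
    qed
    also have "\<dots> = (\<Sum>a<Suc t. if pl!a = y then (\<Sum>b<Suc t. A $$ (k, ql!b) * cofactor B a b) else 0)"
      by (intro sum.cong refl) simp
    finally have "(A * (r \<cdot>\<^sub>m Y)) $$ (k,y) = r * (\<Sum>a<Suc t. if pl!a = y then (\<Sum>b<Suc t. A $$ (k, ql!b) * cofactor B a b) else 0)" .
    also have "\<dots> = (\<Sum>a<Suc t. r * (if pl!a = y then (\<Sum>b<Suc t. A $$ (k, ql!b) * cofactor B a b) else 0))"
      by (rule sum_distrib_left)
    also have "\<dots> = 0" using K1[OF k] by (intro sum.neutral) (simp del: sum.lessThan_Suc)
    finally show "(A * (r \<cdot>\<^sub>m Y)) $$ (k,y) = 0\<^sub>m n n $$ (k,y)" using k y by simp
  qed (use A Yc in auto)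
  have YA: "(r \<cdot>\<^sub>m Y) * A = 0\<^sub>m n n"
  proof (rule eq_matI)
    fix x l assume "x < dim_row (0\<^sub>m n n :: 'a mat)" "l < dim_col (0\<^sub>m n n :: 'a mat)"
    hence x: "x < n" and l: "l < n" by auto
    define g where "g y a b = (if ql!b = x \<and> pl!a = y then cofactor B a b else 0)" for y a b
    have "((r \<cdot>\<^sub>m Y) * A) $$ (x,l) = r * (Y * A) $$ (x,l)"
      using A Yc x l by (simp add: mult_smult_assoc_mat[OF Yc A])
    also have "(Y * A) $$ (x,l) = (\<Sum>y\<in>{0..<n}. (\<Sum>a<Suc t. \<Sum>b<Suc t. g y a b) * A $$ (y,l))"
      using A x l by (simp add: Y_def scalar_prod_def g_def)
    also have "\<dots> = (\<Sum>y\<in>{0..<n}. \<Sum>a<Suc t. \<Sum>b<Suc t. g y a b * A $$ (y,l))"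
      by (simp only: sum_distrib_right)
    also have "\<dots> = (\<Sum>a<Suc t. \<Sum>y\<in>{0..<n}. \<Sum>b<Suc t. g y a b * A $$ (y,l))"
      by (rule sum.swap)
    also have "\<dots> = (\<Sum>a<Suc t. \<Sum>b<Suc t. \<Sum>y\<in>{0..<n}. g y a b * A $$ (y,l))"
      by (intro sum.cong refl sum.swap)
    also have "\<dots> = (\<Sum>a<Suc t. \<Sum>b<Suc t. if ql!b = x then cofactor B a b * A $$ (pl!a, l) else 0)"
    proof (intro sum.cong refl)
      fix a b assume "a \<in> {..<Suc t}"
      hence pa: "pl!a \<in> {0..<n}" using pln by auto
      have "(\<Sum>y\<in>{0..<n}. g y a b * A $$ (y,l)) = (\<Sum>y\<in>{0..<n}. if pl!a = y then (if ql!b = x then cofactor B a b * A $$ (y,l) else 0) else 0)"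
        by (intro sum.cong refl) (simp add: g_def)
      also have "\<dots> = (if ql!b = x then cofactor B a b * A $$ (pl!a, l) else 0)"
        by (simp only: sum.delta'[OF finite_atLeastLessThan] pa if_True)
      finally show "(\<Sum>y\<in>{0..<n}. g y a b * A $$ (y,l)) = (if ql!b = x then cofactor B a b * A $$ (pl!a, l) else 0)" .
    qed
    also have "\<dots> = (\<Sum>b<Suc t. \<Sum>a<Suc t. if ql!b = x then cofactor B a b * A $$ (pl!a, l) else 0)"
      by (rule sum.swap)
    also have "\<dots> = (\<Sum>b<Suc t. if ql!b = x then (\<Sum>a<Suc t. cofactor B a b * A $$ (pl!a, l)) else 0)"
      by (intro sum.cong refl) simp
    finally have "((r \<cdot>\<^sub>m Y) * A) $$ (x,l) = r * (\<Sum>b<Suc t. if ql!b = x then (\<Sum>a<Suc t. cofactor B a b * A $$ (pl!a, l)) else 0)" .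
    also have "\<dots> = (\<Sum>b<Suc t. r * (if ql!b = x then (\<Sum>a<Suc t. cofactor B a b * A $$ (pl!a, l)) else 0))"
      by (rule sum_distrib_left)
    also have "\<dots> = 0" using K2[OF l] by (intro sum.neutral) (simp del: sum.lessThan_Suc)
    finally show "((r \<cdot>\<^sub>m Y) * A) $$ (x,l) = 0\<^sub>m n n $$ (x,l)" using x l by simp
  qed (use A Yc in auto)
  have pli: "pl!a = i \<longleftrightarrow> a = t" if "a < Suc t" for a
  proof (cases "a = t")
    case True thus ?thesis using ps(1) by (simp add: pl_def nth_append)
  next
    case False hence "a < t" using that by simp
    hence "pl!a = ps!a" "ps!a \<in> set ps" using ps(1) by (simp_all add: pl_def nth_append)
    thus ?thesis using i False by auto
  qed
  have qlj: "ql!b = j \<longleftrightarrow> b = t" if "b < Suc t" for b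
  proof (cases "b = t")
    case True thus ?thesis using qs(1) by (simp add: ql_def nth_append)
  next
    case False hence "b < t" using that by simp
    hence "ql!b = qs!b" "qs!b \<in> set qs" using qs(1) by (simp_all add: ql_def nth_append)
    thus ?thesis using j False by auto
  qed
  have "Y $$ (j,i) = (\<Sum>a<Suc t. \<Sum>b<Suc t. if ql!b = j \<and> pl!a = i then cofactor B a b else 0)"
    using i j by (simp add: Y_def)
  also have "\<dots> = (\<Sum>a<Suc t. if t = a then (\<Sum>b<Suc t. if t = b then cofactor B a b else 0) else 0)"
    by (intro sum.cong refl) (auto simp: pli qlj)
  also have "\<dots> = cofactor B t t" by (simp only: sum.delta' finite_lessThan lessThan_iff lessI if_True)
  also have "\<dots> = det (mat_delete B t t)"
    by (simp add: cofactor_def)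
  also have "mat_delete B t t = subm A ps qs"
    by (rule eq_matI) (use ps qs lpl lql in \<open>auto simp: mat_delete_def B_def pl_def ql_def nth_append\<close>)
  finally have "(r \<cdot>\<^sub>m Y) $$ (j,i) \<noteq> 0" using nz i j Yc by simp
  hence "r \<cdot>\<^sub>m Y \<noteq> 0\<^sub>m n n" using i j by auto
  thus ?thesis using AY YA Yc by blast
qed


lemma vertex_det_J:
  fixes A :: "'a::comm_ring_1 mat"
  assumes A: "A \<in> carrier_mat n n" and X: "X \<in> carrier_mat n n" and X0: "X \<noteq> 0\<^sub>m n n"
    and AX: "A * X = 0\<^sub>m n n"
  shows "\<exists>r. r \<noteq> 0 \<and> r * det A = 0"
proof -
  have adj: "adj_mat A \<in> carrier_mat n n" "adj_mat A * A = det A \<cdot>\<^sub>m 1\<^sub>m n" using adj_mat[OF A] by auto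
  have "(adj_mat A * A) * X = adj_mat A * (A * X)" by (rule assoc_mult_mat[OF adj(1) A X])
  also have "\<dots> = 0\<^sub>m n n" using AX adj by simp
  finally have "(det A \<cdot>\<^sub>m 1\<^sub>m n) * X = 0\<^sub>m n n" using adj by simp
  moreover have "(det A \<cdot>\<^sub>m 1\<^sub>m n) * X = det A \<cdot>\<^sub>m X" using X by (simp add: mult_smult_assoc_mat[of _ n n _ n])
  ultimately have dX: "det A \<cdot>\<^sub>m X = 0\<^sub>m n n" by simp
  obtain a b where ab: "a < n" "b < n" "X $$ (a,b) \<noteq> 0"
    using X0 X by (metis carrier_matD(1) carrier_matD(2) eq_matI index_zero_mat(1) zero_carrier_mat carrier_matD)
  have "(det A \<cdot>\<^sub>m X) $$ (a,b) = 0" using dX ab by simp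
  hence "det A * X $$ (a,b) = 0" using ab X by simp
  thus ?thesis using ab by (intro exI[of _ "X $$ (a,b)"]) (simp add: mult.commute)
qed

hide_const (open) Matrix.mat
no_notation Matrix.vec_index (infixl "$" 100)

definition enm :: "nat \<Rightarrow> 'n::finite" where
  "enm = (SOME e. bij_betw e {0..<CARD('n)} UNIV)"

lemma enm_bij: "bij_betw (enm :: nat \<Rightarrow> 'n::finite) {0..<CARD('n)} UNIV"
proof -
  have "\<exists>e::nat\<Rightarrow>'n. bij_betw e {0..<CARD('n)} UNIV" using ex_bij_betw_nat_finite[of "UNIV::'n set"] by simp
  thus ?thesis unfolding enm_def by (rule someI_ex)
qed

lemma enm_surj: "\<exists>a<CARD('n). (enm a :: 'n::finite) = u"
proof -
  have "u \<in> (enm :: nat \<Rightarrow> 'n) ` {0..<CARD('n)}" using enm_bij[where 'n='n] by (simp add: bij_betw_def)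
  thus ?thesis by force
qed

definition toJ :: "'a^'n^'n \<Rightarrow> 'a mat" where
  "toJ M = Matrix.mat CARD('n::finite) CARD('n) (\<lambda>(a,b). M $ enm a $ enm b)"

definition fromJ :: "'a mat \<Rightarrow> 'a^'n^'n" where
  "fromJ C = (\<chi> u v. C $$ (inv_into {0..<CARD('n::finite)} enm u, inv_into {0..<CARD('n)} enm v))"

definition sm :: "'a::times \<Rightarrow> 'a^'n^'n \<Rightarrow> 'a^'n^'n" where
  "sm c M = (\<chi> i j. c * M$i$j)"

lemma toJ_carrier[simp]: "toJ (M::'a^'n^'n) \<in> carrier_mat CARD('n::finite) CARD('n)"
  by (simp add: toJ_def)

lemma toJ_dim[simp]: "dim_row (toJ (M::'a^'n^'n)) = CARD('n::finite)" "dim_col (toJ (M::'a^'n^'n)) = CARD('n::finite)"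
  by (simp_all add: toJ_def)

lemma toJ_index[simp]: "a < CARD('n) \<Longrightarrow> b < CARD('n) \<Longrightarrow> toJ (M::'a^'n^'n::finite) $$ (a,b) = M $ enm a $ enm b"
  by (simp add: toJ_def)

lemma toJ_mult:
  fixes M K :: "'a::comm_ring_1^'n::finite^'n"
  shows "toJ (M ** K) = toJ M * toJ K"
proof (rule eq_matI)
  fix a b assume "a < dim_row (toJ M * toJ K)" "b < dim_col (toJ M * toJ K)"
  hence a: "a < CARD('n)" and b: "b < CARD('n)" by auto
  have "toJ (M ** K) $$ (a,b) = (\<Sum>k\<in>UNIV. M $ enm a $ k * K $ k $ enm b)"
    using a b by (simp add: matrix_matrix_mult_def)
  also have "\<dots> = (\<Sum>c\<in>{0..<CARD('n)}. M $ enm a $ enm c * K $ enm c $ enm b)"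
    by (rule sum.reindex_bij_betw[OF enm_bij, symmetric])
  also have "\<dots> = (toJ M * toJ K) $$ (a,b)"
    using a b by (simp add: scalar_prod_def)
  finally show "toJ (M ** K) $$ (a,b) = (toJ M * toJ K) $$ (a,b)" .
qed auto

lemma toJ_zero_iff:
  fixes M :: "'a::zero^'n::finite^'n"
  shows "toJ M = 0\<^sub>m CARD('n) CARD('n) \<longleftrightarrow> M = 0"
proof
  assume h: "toJ M = 0\<^sub>m CARD('n) CARD('n)"
  have "M $ u $ v = 0" for u v
  proof -
    obtain a where a: "a < CARD('n)" "enm a = u" using enm_surj by blast
    obtain b where b: "b < CARD('n)" "enm b = v" using enm_surj by blast
    have "toJ M $$ (a,b) = 0" using h a b by simp
    thus "M $ u $ v = 0" using a b by simp
  qed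
  thus "M = 0" by (simp add: Finite_Cartesian_Product.vec_eq_iff)
next
  assume "M = 0" thus "toJ M = 0\<^sub>m CARD('n) CARD('n)" by (intro eq_matI) auto
qed

lemma toJ_fromJ:
  assumes "C \<in> carrier_mat CARD('n::finite) CARD('n)"
  shows "toJ (fromJ C :: 'a^'n^'n) = C"
proof (rule eq_matI)
  fix a b assume "a < dim_row C" "b < dim_col C"
  hence a: "a < CARD('n)" and b: "b < CARD('n)" using assms by auto
  have inj: "inj_on (enm::nat\<Rightarrow>'n) {0..<CARD('n)}" using enm_bij bij_betw_def by blast
  show "toJ (fromJ C :: 'a^'n^'n) $$ (a,b) = C $$ (a,b)"
    using a b by (simp add: fromJ_def inv_into_f_f[OF inj])
qed (use assms in auto)

lemma toJ_sm:
  fixes M :: "'a::comm_ring_1^'n::finite^'n"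
  shows "toJ (sm r M) = r \<cdot>\<^sub>m toJ M"
  by (rule eq_matI) (auto simp: sm_def)

lemma mccoy_vec:
  fixes A :: "'a::comm_ring_1^'n::finite^'n"
  assumes r0: "r \<noteq> 0" and rd: "r * Determinant.det (toJ A) = 0"
  shows "\<exists>Y. sm r Y \<noteq> 0 \<and> A ** sm r Y = 0 \<and> sm r Y ** A = 0"
proof -
  obtain Y' where Y': "Y' \<in> carrier_mat CARD('n) CARD('n)" "r \<cdot>\<^sub>m Y' \<noteq> 0\<^sub>m CARD('n) CARD('n)"
     "toJ A * (r \<cdot>\<^sub>m Y') = 0\<^sub>m CARD('n) CARD('n)" "(r \<cdot>\<^sub>m Y') * toJ A = 0\<^sub>m CARD('n) CARD('n)"
    using mccoy[OF toJ_carrier r0 rd] by blast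
  define Y where "Y = (fromJ Y' :: 'a^'n^'n)"
  have tY: "toJ (sm r Y) = r \<cdot>\<^sub>m Y'" unfolding Y_def toJ_sm toJ_fromJ[OF Y'(1)] ..
  have "sm r Y \<noteq> 0" using Y'(2) tY toJ_zero_iff by metis
  moreover have "A ** sm r Y = 0" using Y'(3) tY toJ_mult toJ_zero_iff by metis
  moreover have "sm r Y ** A = 0" using Y'(4) tY toJ_mult toJ_zero_iff by metis
  ultimately show ?thesis by blast
qed

lemma vertex_det_vec:
  fixes A X :: "'a::comm_ring_1^'n::finite^'n"
  assumes X0: "X \<noteq> 0" and AX: "A ** X = 0"
  shows "\<exists>r. r \<noteq> 0 \<and> r * Determinant.det (toJ A) = 0"
proof (rule vertex_det_J[OF toJ_carrier toJ_carrier])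
  show "toJ X \<noteq> 0\<^sub>m CARD('n) CARD('n)" using X0 toJ_zero_iff by metis
  show "toJ A * toJ X = 0\<^sub>m CARD('n) CARD('n)" using AX toJ_mult toJ_zero_iff by metis
qed


section \<open>Generic graph facts\<close>

lemma orth_vertI:
  assumes "x \<noteq> 0" "y \<noteq> 0" "m x y = 0" "m y x = 0"
  shows "x \<in> orth_vertices m"
  using assms unfolding orth_vertices_def by blast

definition reach :: "('b::zero \<Rightarrow> 'b \<Rightarrow> 'b) \<Rightarrow> 'b \<Rightarrow> 'b \<Rightarrow> nat \<Rightarrow> bool" where
  "reach m x y k = (\<exists>k'\<le>k. orth_walk m x y k')"

lemma walk0: "orth_walk m x x 0"
  unfolding orth_walk_def by (intro exI[of _ "\<lambda>_. x"]) simp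

lemma walk_snoc:
  assumes "orth_walk m x y k" "orth_adj m y z"
  shows "orth_walk m x z (Suc k)"
proof -
  obtain p where p: "p 0 = x" "p k = y" "\<forall>i<k. orth_adj m (p i) (p (Suc i))"
    using assms(1) unfolding orth_walk_def by blast
  define q where "q = p(Suc k := z)"
  have "q 0 = x" using p by (simp add: q_def)
  moreover have "q (Suc k) = z" by (simp add: q_def)
  moreover have "\<forall>i<Suc k. orth_adj m (q i) (q (Suc i))"
  proof (intro allI impI)
    fix i assume "i < Suc k"
    show "orth_adj m (q i) (q (Suc i))"
    proof (cases "i = k")
      case True thus ?thesis using p assms(2) by (simp add: q_def)
    next
      case False hence "i < k" using \<open>i < Suc k\<close> by simp
      thus ?thesis using p by (simp add: q_def)
    qed
  qed
  ultimately show ?thesis unfolding orth_walk_def by blast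
qed

lemma reach0: "reach m x x 0"
  unfolding reach_def using walk0 by blast

lemma reach_step:
  assumes "reach m x y k" "y = z \<or> orth_adj m y z"
  shows "reach m x z (Suc k)"
proof -
  obtain k' where k': "k' \<le> k" "orth_walk m x y k'" using assms(1) unfolding reach_def by blast
  show ?thesis
  proof (cases "y = z")
    case True thus ?thesis using k' unfolding reach_def by (intro exI[of _ k']) auto
  next
    case False hence "orth_adj m y z" using assms(2) by simp
    thus ?thesis using k' walk_snoc unfolding reach_def by (intro exI[of _ "Suc k'"]) auto
  qed
qed

lemma reach_mono: "reach m x y k \<Longrightarrow> k \<le> k' \<Longrightarrow> reach m x y k'"
  unfolding reach_def by (meson order_trans)

lemma reach_dist: "reach m x y k \<Longrightarrow> orth_dist m x y \<le> enat k"
proof -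
  assume "reach m x y k"
  then obtain k' where k': "k' \<le> k" "orth_walk m x y k'" unfolding reach_def by blast
  hence "(LEAST k. orth_walk m x y k) \<le> k'" by (rule_tac Least_le) 
  thus ?thesis using k' unfolding orth_dist_def by auto
qed

lemma walk_0D: "orth_walk m x y 0 \<Longrightarrow> x = y"
  unfolding orth_walk_def by auto

lemma walk_SucD:
  assumes "orth_walk m x y (Suc k)"
  shows "\<exists>z. orth_adj m x z \<and> orth_walk m z y k"
proof -
  obtain p where p: "p 0 = x" "p (Suc k) = y" "\<forall>i<Suc k. orth_adj m (p i) (p (Suc i))"
    using assms unfolding orth_walk_def by blast
  have "orth_adj m x (p 1)" using p by (metis One_nat_def zero_less_Suc)
  moreover have "orth_walk m (p 1) y k"
    unfolding orth_walk_def using p by (intro exI[of _ "\<lambda>i. p (Suc i)"]) auto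
  ultimately show ?thesis by blast
qed

lemma dist_ge:
  assumes "\<And>k. k < K \<Longrightarrow> \<not> orth_walk m x y k"
  shows "enat K \<le> orth_dist m x y"
proof (cases "\<exists>k. orth_walk m x y k")
  case True
  hence "orth_walk m x y (LEAST k. orth_walk m x y k)" by (rule LeastI_ex)
  hence "K \<le> (LEAST k. orth_walk m x y k)" using assms not_less by blast
  thus ?thesis using True unfolding orth_dist_def by simp
next
  case False thus ?thesis unfolding orth_dist_def by (subst if_not_P) auto
qed

section \<open>Matrix facts\<close>

abbreviation MM :: "'a::comm_ring_1^'n::finite^'n \<Rightarrow> 'a^'n^'n \<Rightarrow> 'a^'n^'n" where
  "MM \<equiv> (**)"

lemma sm_mult_left[simp]: "sm c (M::'a::comm_ring_1^'n::finite^'n) ** K = sm c (M ** K)"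
  by (simp add: sm_def matrix_matrix_mult_def Finite_Cartesian_Product.vec_eq_iff sum_distrib_left mult.assoc)

lemma sm_mult_right[simp]: "(M::'a::comm_ring_1^'n::finite^'n) ** sm c K = sm c (M ** K)"
  by (simp add: sm_def matrix_matrix_mult_def Finite_Cartesian_Product.vec_eq_iff sum_distrib_left mult.left_commute)

lemma sm_sm: "sm c (sm d (M::'a::comm_ring_1^'n::finite^'n)) = sm (c*d) M"
  by (simp add: sm_def Finite_Cartesian_Product.vec_eq_iff mult.assoc)

lemma sm_0[simp]: "sm 0 (M::'a::comm_ring_1^'n::finite^'n) = 0" "sm c (0::'a::comm_ring_1^'n::finite^'n) = 0"
  by (simp_all add: sm_def Finite_Cartesian_Product.vec_eq_iff)

lemma mat_mult_left: "mat b ** (M::'a::comm_ring_1^'n::finite^'n) = sm b M"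
proof -
  have "(mat b ** M) $ i $ k = sm b M $ i $ k" for i k
  proof -
    have "(mat b ** M) $ i $ k = (\<Sum>j\<in>UNIV. (if i = j then b else 0) * M $ j $ k)"
      by (simp add: matrix_matrix_mult_def Finite_Cartesian_Product.mat_def)
    also have "\<dots> = (\<Sum>j\<in>UNIV. if i = j then b * M $ j $ k else 0)" by (intro sum.cong refl) simp
    also have "\<dots> = b * M $ i $ k" by (simp only: sum.delta' finite UNIV_I if_True)
    finally show ?thesis by (simp add: sm_def)
  qed
  thus ?thesis by (simp add: Finite_Cartesian_Product.vec_eq_iff)
qed

lemma mat_mult_right: "(M::'a::comm_ring_1^'n::finite^'n) ** mat b = sm b M"
proof -
  have "(M ** mat b) $ i $ k = sm b M $ i $ k" for i k
  proof -
    have "(M ** mat b) $ i $ k = (\<Sum>j\<in>UNIV. M $ i $ j * (if j = k then b else 0))"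
      by (simp add: matrix_matrix_mult_def Finite_Cartesian_Product.mat_def)
    also have "\<dots> = (\<Sum>j\<in>UNIV. if k = j then b * M $ i $ j else 0)" by (intro sum.cong refl) (auto simp: mult.commute)
    also have "\<dots> = b * M $ i $ k" by (simp only: sum.delta' finite UNIV_I if_True)
    finally show ?thesis by (simp add: sm_def)
  qed
  thus ?thesis by (simp add: Finite_Cartesian_Product.vec_eq_iff)
qed

lemma mat_nz: "b \<noteq> 0 \<Longrightarrow> mat b \<noteq> (0::'a::comm_ring_1^'n::finite^'n)"
  proof
  assume "b \<noteq> 0" "mat b = (0::'a::comm_ring_1^'n::finite^'n)"
  hence "(mat b :: 'a^'n^'n) $ undefined $ undefined = 0" by simp
  thus False using \<open>b \<noteq> 0\<close> by (simp add: Finite_Cartesian_Product.mat_def)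
qed

lemma st_mat:
  fixes x y :: "'a::comm_ring_1^'n::finite^'n"
  assumes "x \<noteq> 0" "y \<noteq> 0" "x ** y = 0" "y ** x = 0"
  shows "x = y \<or> orth_adj MM x y"
  using assms orth_vertI[of x y MM] orth_vertI[of y x MM] unfolding orth_adj_def by auto

lemma vert_nz: "x \<in> orth_vertices m \<Longrightarrow> x \<noteq> 0"
  unfolding orth_vertices_def by auto

lemma two_sided:
  fixes A :: "'a::comm_ring_1^'n::finite^'n"
  assumes "A \<in> orth_vertices MM"
  shows "\<exists>C::'a^'n^'n. C \<noteq> 0 \<and> A ** C = 0 \<and> C ** A = 0"
proof -
  have "\<exists>X::'a^'n^'n. X \<noteq> 0 \<and> A ** X = 0" using assms unfolding orth_vertices_def by blast
  then obtain X :: "'a^'n^'n" where X: "X \<noteq> 0" "A ** X = 0" by blast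
  obtain r where r: "r \<noteq> 0" "r * Determinant.det (toJ A) = 0" using vertex_det_vec[OF X] by blast
  obtain Y where Y: "sm r Y \<noteq> 0" "A ** sm r Y = 0" "sm r Y ** A = 0"
    using mccoy_vec[OF r] by blast
  show ?thesis by (rule exI[of _ "sm r Y"]) (use Y in blast)
qed

lemma sm_comm: "sm c (sm d (M::'a::comm_ring_1^'n::finite^'n)) = sm d (sm c M)"
  by (simp add: sm_sm mult.commute)

lemma sm_z12: "c * d = 0 \<Longrightarrow> sm c (sm d (M::'a::comm_ring_1^'n::finite^'n)) = 0"
  by (simp add: sm_sm)

lemma sm_z13: "c * e = 0 \<Longrightarrow> sm c (sm d (sm e (M::'a::comm_ring_1^'n::finite^'n))) = 0"
proof -
  assume "c * e = 0"
  hence "c * (d * e) = 0" by (metis mult.left_commute mult_zero_right)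
  thus ?thesis by (simp add: sm_sm)
qed

lemma scalar_nb:
  fixes A :: "'a::comm_ring_1^'n::finite^'n" and z w :: 'a
  assumes zw: "z \<noteq> 0" "w \<noteq> 0" "z * w = 0" and A: "A \<in> orth_vertices MM"
  shows "\<exists>(C::'a^'n^'n) b. C \<noteq> 0 \<and> A ** C = 0 \<and> C ** A = 0 \<and> b \<noteq> 0 \<and> sm b C = 0"
proof -
  obtain C :: "'a^'n^'n" where C: "C \<noteq> 0" "A ** C = 0" "C ** A = 0" using two_sided[OF A] by blast
  show ?thesis
  proof (cases "sm w C = 0")
    case True thus ?thesis using C zw by blast
  next
    case False
    have "sm z (sm w C) = 0" using zw(3) by (rule sm_z12)
    thus ?thesis using False C zw by (intro exI[of _ "sm w C"] exI[of _ z]) simp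
  qed
qed


lemma scalar_claim:
  fixes A :: "'a::comm_ring_1^'n::finite^'n" and z w :: 'a
  assumes zw: "z \<noteq> 0" "w \<noteq> 0" "z * w = 0" and A: "A \<in> orth_vertices MM"
  shows "\<exists>b. (mat b :: 'a^'n^'n) \<in> orth_vertices MM \<and> reach MM A (mat b) (Suc (Suc 0))"
proof -
  obtain C :: "'a^'n^'n" and b where C: "C \<noteq> 0" "A ** C = 0" "C ** A = 0" "b \<noteq> 0" "sm b C = 0"
    using scalar_nb[OF zw A] by blast
  have mb: "(mat b :: 'a^'n^'n) \<noteq> 0" using mat_nz[OF C(4)] .
  have m1: "mat b ** C = 0" using C(5) by (simp add: mat_mult_left)
  have m2: "C ** mat b = 0" using C(5) by (simp add: mat_mult_right)
  have "(mat b :: 'a^'n^'n) \<in> orth_vertices MM" using orth_vertI[of "mat b" C MM] mb C(1) m1 m2 by blast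
  moreover have "reach MM A C (Suc 0)" by (rule reach_step[OF reach0 st_mat[OF vert_nz[OF A] C(1) C(2) C(3)]])
  hence "reach MM A (mat b) (Suc (Suc 0))" by (rule reach_step[OF _ st_mat[OF C(1) mb m2 m1]])
  ultimately show ?thesis by blast
qed

lemma reach4:
  fixes A B :: "'a::comm_ring_1^'n::finite^'n" and z w :: 'a
  assumes zw: "z \<noteq> 0" "w \<noteq> 0" "z * w = 0" and A: "A \<in> orth_vertices MM" and B: "B \<in> orth_vertices MM"
  shows "reach MM A B 4"
proof -
  obtain P :: "'a^'n^'n" and p where P: "P \<noteq> 0" "A ** P = 0" "P ** A = 0" "p \<noteq> 0" "sm p P = 0"
    using scalar_nb[OF zw A] by blast
  obtain Q :: "'a^'n^'n" where Q: "Q \<noteq> 0" "B ** Q = 0" "Q ** B = 0" using two_sided[OF B] by blast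
  have r1: "reach MM A P (Suc 0)" by (rule reach_step[OF reach0 st_mat[OF vert_nz[OF A] P(1) P(2) P(3)]])
  show ?thesis
  proof (cases "sm p Q = 0")
    case True
    have mb: "(mat p :: 'a^'n^'n) \<noteq> 0" using mat_nz[OF P(4)] .
    have m1: "mat p ** P = 0" "P ** mat p = 0" using P(5) by (simp_all add: mat_mult_left mat_mult_right)
    have m2: "mat p ** Q = 0" "Q ** mat p = 0" using True by (simp_all add: mat_mult_left mat_mult_right)
    have "reach MM A (mat p) (Suc (Suc 0))" by (rule reach_step[OF r1 st_mat[OF P(1) mb m1(2) m1(1)]])
    hence "reach MM A Q (Suc (Suc (Suc 0)))" by (rule reach_step[OF _ st_mat[OF mb Q(1) m2(1) m2(2)]])
    hence "reach MM A B (Suc (Suc (Suc (Suc 0))))" by (rule reach_step[OF _ st_mat[OF Q(1) vert_nz[OF B] Q(3) Q(2)]])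
    thus ?thesis by (simp add: numeral_eq_Suc)
  next
    case False
    have o1: "P ** sm p Q = 0"
    proof -
      have "sm p P ** Q = 0" using P(5) by simp
      thus ?thesis by simp
    qed
    have o2: "sm p Q ** P = 0"
    proof -
      have "Q ** sm p P = 0" using P(5) by simp
      thus ?thesis by simp
    qed
    have o3: "sm p Q ** B = 0" "B ** sm p Q = 0" using Q by simp_all
    have "reach MM A (sm p Q) (Suc (Suc 0))" by (rule reach_step[OF r1 st_mat[OF P(1) False o1 o2]])
    hence "reach MM A B (Suc (Suc (Suc 0)))" by (rule reach_step[OF _ st_mat[OF False vert_nz[OF B] o3(1) o3(2)]])
    thus ?thesis by (rule reach_mono) simp
  qed
qed

definition condZ :: "'a::comm_ring_1 itself \<Rightarrow> bool" where
  "condZ _ = (\<forall>a0 \<in> (zero_divisors :: 'a set). \<exists>a1 a2. a1 \<noteq> 0 \<and> a2 \<noteq> 0 \<and> a0 * a1 = 0 \<and> a0 * a2 = 0 \<and> a1 * a2 = 0)"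

lemma Kp:
  fixes A :: "'a::comm_ring_1^'n::finite^'n"
  assumes c: "condZ TYPE('a)" and A: "A \<in> orth_vertices MM"
  shows "\<exists>a1 a2 (X1::'a^'n^'n) (X2::'a^'n^'n). a1 * a2 = 0 \<and> sm a1 X1 \<noteq> 0 \<and> sm a2 X2 \<noteq> 0 \<and>
     A ** sm a1 X1 = 0 \<and> sm a1 X1 ** A = 0 \<and> A ** sm a2 X2 = 0 \<and> sm a2 X2 ** A = 0"
proof -
  have "\<exists>X::'a^'n^'n. X \<noteq> 0 \<and> A ** X = 0" using A unfolding orth_vertices_def by blast
  then obtain X :: "'a^'n^'n" where X: "X \<noteq> 0" "A ** X = 0" by blast
  obtain r where r: "r \<noteq> 0" "r * Determinant.det (toJ A) = 0" using vertex_det_vec[OF X] by blast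
  have "Determinant.det (toJ A) \<in> zero_divisors" unfolding zero_divisors_def using r by (auto simp: mult.commute)
  then obtain a1 a2 where a: "a1 \<noteq> 0" "a2 \<noteq> 0" "Determinant.det (toJ A) * a1 = 0" "Determinant.det (toJ A) * a2 = 0" "a1 * a2 = 0"
    using c unfolding condZ_def by blast
  obtain X1 :: "'a^'n^'n" where X1: "sm a1 X1 \<noteq> 0" "A ** sm a1 X1 = 0" "sm a1 X1 ** A = 0"
    using mccoy_vec[OF a(1)] a(3) by (auto simp: mult.commute)
  obtain X2 :: "'a^'n^'n" where X2: "sm a2 X2 \<noteq> 0" "A ** sm a2 X2 = 0" "sm a2 X2 ** A = 0"
    using mccoy_vec[OF a(2)] a(4) by (auto simp: mult.commute)
  show ?thesis using X1 X2 a(5) by blast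
qed


lemma sm_mm: "sm c (M::'a::comm_ring_1^'n::finite^'n) ** sm d K = sm (c*d) (M ** K)"
  by (simp add: sm_sm mult.commute)

lemma pair_orth:
  fixes A B X1 X2 Y1 Y2 :: "'a::comm_ring_1^'n::finite^'n" and a1 a2 b1 b2 :: 'a
  assumes a12: "a1 * a2 = 0" and b12: "b1 * b2 = 0"
    and hA: "sm a1 X1 \<noteq> 0" "sm a2 X2 \<noteq> 0" "A ** sm a1 X1 = 0" "sm a1 X1 ** A = 0" "A ** sm a2 X2 = 0" "sm a2 X2 ** A = 0"
    and hB: "sm b1 Y1 \<noteq> 0" "sm b2 Y2 \<noteq> 0" "B ** sm b1 Y1 = 0" "sm b1 Y1 ** B = 0" "B ** sm b2 Y2 = 0" "sm b2 Y2 ** B = 0"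
  shows "\<exists>P Q :: 'a^'n^'n. P \<noteq> 0 \<and> Q \<noteq> 0 \<and> A ** P = 0 \<and> P ** A = 0 \<and> B ** Q = 0 \<and> Q ** B = 0 \<and> P ** Q = 0 \<and> Q ** P = 0"
proof -
  have s1: "b1 * a1 * b2 = 0" "b2 * (b1 * a1) = 0" "b2 * a1 * b1 = 0" "b1 * (b2 * a1) = 0"
  proof -
    have "b1 * a1 * b2 = a1 * (b1 * b2)" "b2 * (b1 * a1) = a1 * (b1 * b2)" "b2 * a1 * b1 = a1 * (b1 * b2)" "b1 * (b2 * a1) = a1 * (b1 * b2)"
      by (simp_all add: ac_simps)
    thus "b1 * a1 * b2 = 0" "b2 * (b1 * a1) = 0" "b2 * a1 * b1 = 0" "b1 * (b2 * a1) = 0" using b12 by simp_all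
  qed
  have s2: "a2 * (a1 * b1) = 0" "a1 * b1 * a2 = 0"
  proof -
    have "a2 * (a1 * b1) = b1 * (a1 * a2)" "a1 * b1 * a2 = b1 * (a1 * a2)" by (simp_all add: ac_simps)
    thus "a2 * (a1 * b1) = 0" "a1 * b1 * a2 = 0" using a12 by simp_all
  qed
  have hA': "sm a1 (A ** X1) = 0" "sm a1 (X1 ** A) = 0" "sm a2 (A ** X2) = 0" "sm a2 (X2 ** A) = 0"
    using hA by simp_all
  have hB': "sm b1 (B ** Y1) = 0" "sm b1 (Y1 ** B) = 0" "sm b2 (B ** Y2) = 0" "sm b2 (Y2 ** B) = 0"
    using hB by simp_all
  show ?thesis
  proof (cases "sm b1 (sm a1 X1) = 0")
    case False
    have "sm b1 (sm a1 X1) ** sm b2 Y2 = 0" by (simp only: sm_sm sm_mm s1 sm_0)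
    moreover have "sm b2 Y2 ** sm b1 (sm a1 X1) = 0" by (simp only: sm_sm sm_mm s1 sm_0)
    moreover have "A ** sm b1 (sm a1 X1) = 0" "sm b1 (sm a1 X1) ** A = 0" using hA' by simp_all
    ultimately show ?thesis using False hB by blast
  next
    case T1: True
    show ?thesis
    proof (cases "sm b2 (sm a1 X1) = 0")
      case False
      have "sm b2 (sm a1 X1) ** sm b1 Y1 = 0" by (simp only: sm_sm sm_mm s1 sm_0)
      moreover have "sm b1 Y1 ** sm b2 (sm a1 X1) = 0" by (simp only: sm_sm sm_mm s1 sm_0)
      moreover have "A ** sm b2 (sm a1 X1) = 0" "sm b2 (sm a1 X1) ** A = 0" using hA' by simp_all
      ultimately show ?thesis using False hB by blast
    next
      case T2: True
      show ?thesis
      proof (cases "sm a1 (sm b1 Y1) = 0")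
        case False
        have "sm a2 X2 ** sm a1 (sm b1 Y1) = 0" by (simp only: sm_sm sm_mm s2 sm_0)
        moreover have "sm a1 (sm b1 Y1) ** sm a2 X2 = 0" by (simp only: sm_sm sm_mm s2 sm_0)
        moreover have "B ** sm a1 (sm b1 Y1) = 0" "sm a1 (sm b1 Y1) ** B = 0" using hB' by simp_all
        ultimately show ?thesis using False hA by blast
      next
        case T3: True
        have e0: "sm (a1 * b1) Y1 = 0" using T3 by (simp only: sm_sm)
        have "sm a1 X1 ** sm b1 Y1 = sm (a1*b1) (X1 ** Y1)" by (rule sm_mm)
        also have "\<dots> = X1 ** sm (a1 * b1) Y1" by simp
        also have "\<dots> = 0" using e0 by simp
        finally have o1: "sm a1 X1 ** sm b1 Y1 = 0" .
        have "sm b1 Y1 ** sm a1 X1 = sm (b1*a1) (Y1 ** X1)" by (rule sm_mm)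
        also have "\<dots> = sm (a1 * b1) Y1 ** X1" by (simp add: mult.commute)
        also have "\<dots> = 0" using e0 by simp
        finally have o2: "sm b1 Y1 ** sm a1 X1 = 0" .
        show ?thesis using o1 o2 hA hB by blast
      qed
    qed
  qed
qed

lemma reach3:
  fixes A B :: "'a::comm_ring_1^'n::finite^'n"
  assumes c: "condZ TYPE('a)" and A: "A \<in> orth_vertices MM" and B: "B \<in> orth_vertices MM"
  shows "reach MM A B 3"
proof -
  obtain a1 a2 X1 X2 where hA: "a1 * a2 = 0" "sm a1 X1 \<noteq> 0" "sm a2 X2 \<noteq> 0"
     "A ** sm a1 X1 = 0" "sm a1 X1 ** A = 0" "A ** sm a2 X2 = 0" "sm a2 X2 ** A = (0::'a^'n^'n)"
    using Kp[OF c A] by blast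
  obtain b1 b2 Y1 Y2 where hB: "b1 * b2 = 0" "sm b1 Y1 \<noteq> 0" "sm b2 Y2 \<noteq> 0"
     "B ** sm b1 Y1 = 0" "sm b1 Y1 ** B = 0" "B ** sm b2 Y2 = 0" "sm b2 Y2 ** B = (0::'a^'n^'n)"
    using Kp[OF c B] by blast
  obtain P Q :: "'a^'n^'n" where PQ: "P \<noteq> 0" "Q \<noteq> 0" "A ** P = 0" "P ** A = 0" "B ** Q = 0" "Q ** B = 0" "P ** Q = 0" "Q ** P = 0"
    using pair_orth[OF hA(1) hB(1) hA(2-) hB(2-)] by blast
  have "reach MM A P (Suc 0)" by (rule reach_step[OF reach0 st_mat[OF vert_nz[OF A] PQ(1) PQ(3) PQ(4)]])
  hence "reach MM A Q (Suc (Suc 0))" by (rule reach_step[OF _ st_mat[OF PQ(1) PQ(2) PQ(7) PQ(8)]])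
  hence "reach MM A B (Suc (Suc (Suc 0)))" by (rule reach_step[OF _ st_mat[OF PQ(2) vert_nz[OF B] PQ(6) PQ(5)]])
  thus ?thesis by (simp add: numeral_eq_Suc)
qed


section \<open>Lower bound witnesses\<close>

lemma sum_single:
  fixes f :: "'n::finite \<Rightarrow> 'a::comm_monoid_add"
  assumes "\<And>m. m \<noteq> t \<Longrightarrow> f m = 0"
  shows "sum f UNIV = f t"
proof -
  have "sum f UNIV = (\<Sum>m\<in>UNIV. if t = m then f t else 0)" by (rule sum.cong) (use assms in auto)
  also have "\<dots> = f t" by (simp only: sum.delta' finite UNIV_I if_True)
  finally show ?thesis .
qed

definition Ad :: "'n::finite \<Rightarrow> 'a::comm_ring_1 \<Rightarrow> 'a^'n^'n" where
  "Ad i a = (\<chi> k l. if k = l then (if k = i then a else 1) else 0)"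

definition Bd :: "'n::finite \<Rightarrow> 'n \<Rightarrow> 'a::comm_ring_1 \<Rightarrow> 'a^'n^'n" where
  "Bd i j a = (\<chi> k l. if k = i \<and> l = j then 1 else if k = j \<and> l = i then a else if k = l \<and> k \<noteq> i \<and> k \<noteq> j then 1 else 0)"

definition Eu :: "'n::finite \<Rightarrow> 'n \<Rightarrow> 'a::comm_ring_1 \<Rightarrow> 'a^'n^'n" where
  "Eu i j q = (\<chi> k l. if k = i \<and> l = j then q else 0)"

lemma Ad_left: "(Ad i a ** D) $ k $ l = (if k = i then a else 1) * D $ k $ l"
proof -
  have "(Ad i a ** D) $ k $ l = (\<Sum>m\<in>UNIV. Ad i a $ k $ m * D $ m $ l)" by (simp add: matrix_matrix_mult_def)
  also have "\<dots> = Ad i a $ k $ k * D $ k $ l" by (rule sum_single) (simp add: Ad_def)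
  finally show ?thesis by (simp add: Ad_def)
qed

lemma Ad_right: "(D ** Ad i a) $ k $ l = D $ k $ l * (if l = i then a else 1)"
proof -
  have "(D ** Ad i a) $ k $ l = (\<Sum>m\<in>UNIV. D $ k $ m * Ad i a $ m $ l)" by (simp add: matrix_matrix_mult_def)
  also have "\<dots> = D $ k $ l * Ad i a $ l $ l" by (rule sum_single) (simp add: Ad_def)
  finally show ?thesis by (simp add: Ad_def)
qed

lemma Bd_left:
  assumes ij: "i \<noteq> j"
  shows "(Bd i j a ** D) $ k $ l = (if k = i then D $ j $ l else if k = j then a * D $ i $ l else D $ k $ l)"
proof -
  have e: "(Bd i j a ** D) $ k $ l = (\<Sum>m\<in>UNIV. Bd i j a $ k $ m * D $ m $ l)" by (simp add: matrix_matrix_mult_def)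
  show ?thesis
  proof (cases "k = i")
    case True
    have "(\<Sum>m\<in>UNIV. Bd i j a $ k $ m * D $ m $ l) = Bd i j a $ k $ j * D $ j $ l"
      by (rule sum_single) (use True ij in \<open>simp add: Bd_def\<close>)
    thus ?thesis using e True ij by (simp add: Bd_def)
  next
    case F1: False
    show ?thesis
    proof (cases "k = j")
      case True
      have "(\<Sum>m\<in>UNIV. Bd i j a $ k $ m * D $ m $ l) = Bd i j a $ k $ i * D $ i $ l"
        by (rule sum_single) (use True ij in \<open>simp add: Bd_def\<close>)
      thus ?thesis using e True ij by (simp add: Bd_def)
    next
      case False
      have "(\<Sum>m\<in>UNIV. Bd i j a $ k $ m * D $ m $ l) = Bd i j a $ k $ k * D $ k $ l"
        by (rule sum_single) (use False F1 ij in \<open>simp add: Bd_def\<close>)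
      thus ?thesis using e False F1 ij by (simp add: Bd_def)
    qed
  qed
qed

lemma Bd_right:
  assumes ij: "i \<noteq> j"
  shows "(D ** Bd i j a) $ k $ l = (if l = j then D $ k $ i else if l = i then D $ k $ j * a else D $ k $ l)"
proof -
  have e: "(D ** Bd i j a) $ k $ l = (\<Sum>m\<in>UNIV. D $ k $ m * Bd i j a $ m $ l)" by (simp add: matrix_matrix_mult_def)
  show ?thesis
  proof (cases "l = j")
    case True
    have "(\<Sum>m\<in>UNIV. D $ k $ m * Bd i j a $ m $ l) = D $ k $ i * Bd i j a $ i $ l"
      by (rule sum_single) (use True ij in \<open>simp add: Bd_def\<close>)
    thus ?thesis using e True ij by (simp add: Bd_def)
  next
    case F1: False
    show ?thesis
    proof (cases "l = i")
      case True
      have "(\<Sum>m\<in>UNIV. D $ k $ m * Bd i j a $ m $ l) = D $ k $ j * Bd i j a $ j $ l"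
        by (rule sum_single) (use True ij in \<open>simp add: Bd_def\<close>)
      thus ?thesis using e True ij by (simp add: Bd_def)
    next
      case False
      have "(\<Sum>m\<in>UNIV. D $ k $ m * Bd i j a $ m $ l) = D $ k $ l * Bd i j a $ l $ l"
        by (rule sum_single) (use False F1 ij in \<open>simp add: Bd_def\<close>)
      thus ?thesis using e False F1 ij by (simp add: Bd_def)
    qed
  qed
qed

lemma Ad_orth:
  fixes D :: "'a::comm_ring_1^'n::finite^'n"
  assumes "Ad i a ** D = 0" "D ** Ad i a = 0"
  shows "D $ k $ l \<noteq> 0 \<Longrightarrow> k = i \<and> l = i" and "a * D $ i $ i = 0"
proof -
  have L: "(if k = i then a else 1) * D $ k $ l = 0" for k l
    using assms(1) Ad_left[of i a D k l] by simp
  have R: "D $ k $ l * (if l = i then a else 1) = 0" for k l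
    using assms(2) Ad_right[of D i a k l] by simp
  show "D $ k $ l \<noteq> 0 \<Longrightarrow> k = i \<and> l = i" using L[where k=k and l=l] R[where k=k and l=l] by (auto split: if_splits)
  show "a * D $ i $ i = 0" using L[where k=i and l=i] by simp
qed

lemma Bd_orth:
  fixes D :: "'a::comm_ring_1^'n::finite^'n"
  assumes ij: "i \<noteq> j" and "Bd i j a ** D = 0" "D ** Bd i j a = 0"
  shows "D $ k $ l \<noteq> 0 \<Longrightarrow> k = i \<and> l = j" and "a * D $ i $ j = 0"
proof -
  have L: "(if k = i then D $ j $ l else if k = j then a * D $ i $ l else D $ k $ l) = 0" for k l
    using assms(2) Bd_left[OF ij, of a D k l] by simp
  have R: "(if l = j then D $ k $ i else if l = i then D $ k $ j * a else D $ k $ l) = 0" for k l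
    using assms(3) Bd_right[OF ij, of D a k l] by simp
  show "D $ k $ l \<noteq> 0 \<Longrightarrow> k = i \<and> l = j"
  proof -
    assume nz: "D $ k $ l \<noteq> 0"
    have "k = i"
    proof (rule ccontr)
      assume "k \<noteq> i"
      show False
      proof (cases "k = j")
        case True thus False using L[where k=i and l=l] nz ij by simp
      next
        case False thus False using L[where k=k and l=l] nz \<open>k \<noteq> i\<close> by simp
      qed
    qed
    moreover have "l = j"
    proof (rule ccontr)
      assume "l \<noteq> j"
      show False
      proof (cases "l = i")
        case True thus False using R[where k=k and l=j] nz ij by simp
      next
        case False thus False using R[where k=k and l=l] nz \<open>l \<noteq> j\<close> by simp
      qed
    qed
    ultimately show ?thesis by simp
  qed
  show "a * D $ i $ j = 0" using L[where k=j and l=j] ij by simp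
qed

lemma mat_eq0: "(\<And>k l. (D::'a::zero^'n::finite^'n) $ k $ l = 0) \<Longrightarrow> D = 0"
  by (simp add: Finite_Cartesian_Product.vec_eq_iff)

lemma Ad_vert:
  fixes a :: "'a::comm_ring_1"
  assumes ij: "(i::'n::finite) \<noteq> j" and a: "a \<in> zero_divisors" and nt: "(1::'a) \<noteq> 0"
  shows "(Ad i a :: 'a^'n^'n) \<in> orth_vertices MM"
proof -
  obtain q where q: "q \<noteq> 0" "a * q = 0" using a unfolding zero_divisors_def by blast
  have "Ad i a ** Eu i i q = (0::'a^'n^'n)" by (rule mat_eq0) (auto simp: Ad_left Eu_def q)
  moreover have "Eu i i q ** Ad i a = (0::'a^'n^'n)" by (rule mat_eq0) (auto simp: Ad_right Eu_def q mult.commute)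
  moreover have "(Ad i a :: 'a^'n^'n) \<noteq> 0"
  proof
    assume "(Ad i a :: 'a^'n^'n) = 0"
    hence "(Ad i a :: 'a^'n^'n) $ j $ j = 0" by simp
    thus False using ij nt by (simp add: Ad_def)
  qed
  moreover have "(Eu i i q :: 'a^'n^'n) \<noteq> 0"
  proof
    assume "(Eu i i q :: 'a^'n^'n) = 0"
    hence "(Eu i i q :: 'a^'n^'n) $ i $ i = 0" by simp
    thus False using q by (simp add: Eu_def)
  qed
  ultimately show ?thesis using orth_vertI[of "Ad i a :: 'a^'n^'n" "Eu i i q" MM] by blast
qed

lemma Bd_vert:
  fixes a :: "'a::comm_ring_1"
  assumes ij: "(i::'n::finite) \<noteq> j" and a: "a \<in> zero_divisors" and nt: "(1::'a) \<noteq> 0"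
  shows "(Bd i j a :: 'a^'n^'n) \<in> orth_vertices MM"
proof -
  obtain q where q: "q \<noteq> 0" "a * q = 0" using a unfolding zero_divisors_def by blast
  have "Bd i j a ** Eu i j q = (0::'a^'n^'n)" by (rule mat_eq0) (use ij in \<open>auto simp: Bd_left Eu_def q\<close>)
  moreover have "Eu i j q ** Bd i j a = (0::'a^'n^'n)" by (rule mat_eq0) (use ij in \<open>auto simp: Bd_right Eu_def q mult.commute\<close>)
  moreover have "(Bd i j a :: 'a^'n^'n) \<noteq> 0"
  proof
    assume "(Bd i j a :: 'a^'n^'n) = 0"
    hence "(Bd i j a :: 'a^'n^'n) $ i $ j = 0" by simp
    thus False using ij nt by (simp add: Bd_def)
  qed
  moreover have "(Eu i j q :: 'a^'n^'n) \<noteq> 0"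
  proof
    assume "(Eu i j q :: 'a^'n^'n) = 0"
    hence "(Eu i j q :: 'a^'n^'n) $ i $ j = 0" by simp
    thus False using q by (simp add: Eu_def)
  qed
  ultimately show ?thesis using orth_vertI[of "Bd i j a :: 'a^'n^'n" "Eu i j q" MM] by blast
qed

lemma AB_basic:
  fixes a :: "'a::comm_ring_1"
  assumes ij: "(i::'n::finite) \<noteq> j" and nt: "(1::'a) \<noteq> 0"
  shows "(Ad i a :: 'a^'n^'n) \<noteq> Bd i j a" and "(Bd i j a :: 'a^'n^'n) ** Ad i a \<noteq> 0"
proof -
  show "(Ad i a :: 'a^'n^'n) \<noteq> Bd i j a"
  proof
    assume "(Ad i a :: 'a^'n^'n) = Bd i j a"
    hence "(Ad i a :: 'a^'n^'n) $ i $ j = Bd i j a $ i $ j" by simp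
    thus False using ij nt by (simp add: Ad_def Bd_def)
  qed
  show "(Bd i j a :: 'a^'n^'n) ** Ad i a \<noteq> 0"
  proof
    assume "(Bd i j a :: 'a^'n^'n) ** Ad i a = 0"
    hence "((Bd i j a :: 'a^'n^'n) ** Ad i a) $ i $ j = 0" by simp
    thus False using ij nt by (simp add: Ad_right Bd_def)
  qed
qed

lemma nowalk3:
  fixes a :: "'a::comm_ring_1"
  assumes ij: "(i::'n::finite) \<noteq> j" and nt: "(1::'a) \<noteq> 0" and "(k::nat) < 3"
  shows "\<not> orth_walk MM (Ad i a :: 'a^'n^'n) (Bd i j a) k"
proof -
  from assms(3) have "k = 0 \<or> k = 1 \<or> k = 2" by auto
  thus "\<not> orth_walk MM (Ad i a :: 'a^'n^'n) (Bd i j a) k"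
  proof (elim disjE)
    assume "k = 0" thus ?thesis using walk_0D AB_basic(1)[OF ij nt] by metis
  next
    assume k: "k = 1"
    show ?thesis
    proof
      assume "orth_walk MM (Ad i a :: 'a^'n^'n) (Bd i j a) k"
      then obtain z :: "'a^'n^'n" where "orth_adj MM (Ad i a) z" "orth_walk MM z (Bd i j a) 0"
        using walk_SucD k by fastforce
      hence "orth_adj MM (Ad i a) (Bd i j a)" using walk_0D by metis
      thus False using AB_basic(2)[OF ij nt, of a] unfolding orth_adj_def by blast
    qed
  next
    assume k: "k = 2"
    show ?thesis
    proof
      assume "orth_walk MM (Ad i a :: 'a^'n^'n) (Bd i j a) k"
      hence "orth_walk MM (Ad i a :: 'a^'n^'n) (Bd i j a) (Suc (Suc 0))" using k by (simp add: numeral_2_eq_2)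
      then obtain z :: "'a^'n^'n" where z1: "orth_adj MM (Ad i a) z" and "orth_walk MM z (Bd i j a) (Suc 0)"
        using walk_SucD by blast
      then obtain y :: "'a^'n^'n" where "orth_adj MM z y" "orth_walk MM y (Bd i j a) 0"
        using walk_SucD by blast
      hence z2: "orth_adj MM z (Bd i j a)" using walk_0D by metis
      have zn: "z \<noteq> 0" using z1 vert_nz unfolding orth_adj_def by blast
      have "z = 0"
      proof (rule mat_eq0)
        fix k l
        show "z $ k $ l = 0"
        proof (rule ccontr)
          assume "z $ k $ l \<noteq> 0"
          hence "k = i \<and> l = i" using Ad_orth(1)[of i a z k l] z1 unfolding orth_adj_def by blast
          moreover have "k = i \<and> l = j" using Bd_orth(1)[OF ij, of a z k l] z2 \<open>z $ k $ l \<noteq> 0\<close> unfolding orth_adj_def by blast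
          ultimately show False using ij by simp
        qed
      qed
      thus False using zn by simp
    qed
  qed
qed

lemma dist_AB3:
  fixes a :: "'a::comm_ring_1"
  assumes ij: "(i::'n::finite) \<noteq> j" and nt: "(1::'a) \<noteq> 0"
  shows "enat 3 \<le> orth_dist MM (Ad i a :: 'a^'n^'n) (Bd i j a)"
  by (rule dist_ge) (rule nowalk3[OF ij nt])

lemma dist_AB4:
  fixes a :: "'a::comm_ring_1"
  assumes ij: "(i::'n::finite) \<noteq> j" and nt: "(1::'a) \<noteq> 0"
    and nc: "\<And>a1 a2. a1 \<noteq> 0 \<Longrightarrow> a2 \<noteq> 0 \<Longrightarrow> a * a1 = 0 \<Longrightarrow> a * a2 = 0 \<Longrightarrow> a1 * a2 = 0 \<Longrightarrow> False"
  shows "enat 4 \<le> orth_dist MM (Ad i a :: 'a^'n^'n) (Bd i j a)"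
proof (rule dist_ge)
  fix k :: nat assume k4: "k < 4"
  show "\<not> orth_walk MM (Ad i a :: 'a^'n^'n) (Bd i j a) k"
  proof (cases "k < 3")
    case True
    thus ?thesis by (rule nowalk3[OF ij nt])
  next
    case False
    hence k: "k = Suc (Suc (Suc 0))" using k4 by simp
    show ?thesis
    proof
      assume "orth_walk MM (Ad i a :: 'a^'n^'n) (Bd i j a) k"
      hence "orth_walk MM (Ad i a :: 'a^'n^'n) (Bd i j a) (Suc (Suc (Suc 0)))" using k by simp
      then obtain z :: "'a^'n^'n" where z1: "orth_adj MM (Ad i a) z" and "orth_walk MM z (Bd i j a) (Suc (Suc 0))"
        using walk_SucD by blast
      then obtain y :: "'a^'n^'n" where zy: "orth_adj MM z y" and "orth_walk MM y (Bd i j a) (Suc 0)"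
        using walk_SucD by blast
      then obtain x :: "'a^'n^'n" where "orth_adj MM y x" "orth_walk MM x (Bd i j a) 0"
        using walk_SucD by blast
      hence y2: "orth_adj MM y (Bd i j a)" using walk_0D by metis
      have zn: "z \<noteq> 0" and yn: "y \<noteq> 0" using z1 y2 vert_nz unfolding orth_adj_def by blast+
      have zs: "z $ k $ l = 0" if "\<not> (k = i \<and> l = i)" for k l
        using Ad_orth(1)[of i a z k l] z1 that unfolding orth_adj_def by blast
      have ys: "y $ k $ l = 0" if "\<not> (k = i \<and> l = j)" for k l
        using Bd_orth(1)[OF ij, of a y k l] y2 that unfolding orth_adj_def by blast
      have zii: "z $ i $ i \<noteq> 0"
      proof
        assume "z $ i $ i = 0"
        hence "z = 0" using zs by (intro mat_eq0) (metis)
        thus False using zn by simp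
      qed
      have yij: "y $ i $ j \<noteq> 0"
      proof
        assume "y $ i $ j = 0"
        hence "y = 0" using ys by (intro mat_eq0) (metis)
        thus False using yn by simp
      qed
      have az: "a * z $ i $ i = 0" using Ad_orth(2)[of i a z] z1 unfolding orth_adj_def by blast
      have ay: "a * y $ i $ j = 0" using Bd_orth(2)[OF ij, of a y] y2 unfolding orth_adj_def by blast
      have "(z ** y) $ i $ j = (\<Sum>m\<in>UNIV. z $ i $ m * y $ m $ j)" by (simp add: matrix_matrix_mult_def)
      also have "\<dots> = z $ i $ i * y $ i $ j" by (rule sum_single) (simp add: zs)
      finally have "(z ** y) $ i $ j = z $ i $ i * y $ i $ j" .
      moreover have "z ** y = 0" using zy unfolding orth_adj_def by blast
      ultimately have "z $ i $ i * y $ i $ j = 0" by simp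
      thus False using nc[OF zii yij az ay] by simp
    qed
  qed
qed


lemma cond_let:
  "(let a = [a0, a1, a2] in \<forall>i<3. \<forall>j<3. i \<noteq> j \<longrightarrow> a ! i * a ! j = 0) \<longleftrightarrow>
   (a0 * a1 = 0 \<and> a0 * a2 = 0 \<and> a1 * a2 = (0::'a::comm_ring_1))"
  unfolding Let_def numeral_3_eq_3 by (auto simp: less_Suc_eq mult.commute)

theorem theorem1:
  assumes nontriv: "(1::'a::comm_ring_1) \<noteq> 0"
    and ZR: "(zero_divisors :: 'a set) \<noteq> {0}"
    and n: "CARD('n::finite) > 1"
  shows "orth_connected ((**) :: 'a^'n^'n \<Rightarrow> 'a^'n^'n \<Rightarrow> 'a^'n^'n)
    \<and> (orth_diam ((**) :: 'a^'n^'n \<Rightarrow> 'a^'n^'n \<Rightarrow> 'a^'n^'n) = 3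
       \<or> orth_diam ((**) :: 'a^'n^'n \<Rightarrow> 'a^'n^'n \<Rightarrow> 'a^'n^'n) = 4)
    \<and> (orth_diam ((**) :: 'a^'n^'n \<Rightarrow> 'a^'n^'n \<Rightarrow> 'a^'n^'n) = 3 \<longleftrightarrow>
         (\<forall>a0 \<in> (zero_divisors :: 'a set). \<exists>a1 a2. a1 \<noteq> 0 \<and> a2 \<noteq> 0 \<and>
            (let a = [a0, a1, a2] in \<forall>i<3. \<forall>j<3. i \<noteq> j \<longrightarrow> a ! i * a ! j = 0)))
    \<and> (\<forall>A \<in> orth_vertices ((**) :: 'a^'n^'n \<Rightarrow> 'a^'n^'n \<Rightarrow> 'a^'n^'n).
         \<exists>b::'a. mat b \<in> orth_vertices ((**) :: 'a^'n^'n \<Rightarrow> 'a^'n^'n \<Rightarrow> 'a^'n^'n)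
           \<and> orth_dist ((**) :: 'a^'n^'n \<Rightarrow> 'a^'n^'n \<Rightarrow> 'a^'n^'n) A (mat b) \<le> 2)"
proof -
  let ?m = "(**) :: 'a^'n^'n \<Rightarrow> 'a^'n^'n \<Rightarrow> 'a^'n^'n"
  let ?V = "orth_vertices ?m"
  obtain i :: 'n where True by blast
  have "UNIV \<noteq> {i}"
  proof
    assume h: "UNIV = {i}"
    have "CARD('n) = card {i}" by (simp only: h)
    hence "CARD('n) = 1" by simp
    thus False using n by simp
  qed
  then obtain j :: 'n where ij: "i \<noteq> j" by (metis UNIV_I insertI1 subsetI subset_antisym empty_iff insertE)
  have Z0: "(0::'a) \<in> zero_divisors" unfolding zero_divisors_def using nontriv by (intro CollectI exI[of _ 1]) simp
  obtain z :: 'a where z: "z \<in> zero_divisors" "z \<noteq> 0" using ZR Z0 by blast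
  obtain w :: 'a where w: "w \<noteq> 0" "z * w = 0" using z(1) unfolding zero_divisors_def by blast
  have d4: "orth_dist ?m A B \<le> 4" if "A \<in> ?V" "B \<in> ?V" for A B
    using reach_dist[OF reach4[OF z(2) w(1) w(2) that]] by (simp add: numeral_eq_enat)
  have conn: "orth_connected ?m"
    unfolding orth_connected_def
  proof (intro ballI)
    fix A B assume "A \<in> ?V" "B \<in> ?V"
    hence "orth_dist ?m A B \<le> 4" by (rule d4)
    thus "orth_dist ?m A B \<noteq> \<infinity>" by (metis enat_ord_simps(5) numeral_ne_infinity)
  qed
  have dle4: "orth_diam ?m \<le> 4"
    unfolding orth_diam_def by (intro SUP_least d4)
  have AV: "(Ad i 0 :: 'a^'n^'n) \<in> ?V" by (rule Ad_vert[OF ij Z0 nontriv])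
  have BV: "(Bd i j 0 :: 'a^'n^'n) \<in> ?V" by (rule Bd_vert[OF ij Z0 nontriv])
  have dge3: "3 \<le> orth_diam ?m"
  proof -
    have "enat 3 \<le> orth_dist ?m (Ad i 0) (Bd i j 0)" by (rule dist_AB3[OF ij nontriv])
    hence "3 \<le> orth_dist ?m (Ad i 0) (Bd i j 0)" by (simp add: numeral_eq_enat)
    thus ?thesis unfolding orth_diam_def by (intro SUP_upper2[OF AV] SUP_upper2[OF BV])
  qed
  have ceq: "(\<forall>a0 \<in> (zero_divisors :: 'a set). \<exists>a1 a2. a1 \<noteq> 0 \<and> a2 \<noteq> 0 \<and>
            (let a = [a0, a1, a2] in \<forall>i<3. \<forall>j<3. i \<noteq> j \<longrightarrow> a ! i * a ! j = 0)) \<longleftrightarrow> condZ TYPE('a)"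
    unfolding condZ_def cond_let ..
  have diam: "(orth_diam ?m = 3 \<or> orth_diam ?m = 4) \<and> (orth_diam ?m = 3 \<longleftrightarrow> condZ TYPE('a))"
  proof (cases "condZ TYPE('a)")
    case True
    have "orth_dist ?m A B \<le> 3" if "A \<in> ?V" "B \<in> ?V" for A B
      using reach_dist[OF reach3[OF True that]] by (simp add: numeral_eq_enat)
    hence "orth_diam ?m \<le> 3" unfolding orth_diam_def by (intro SUP_least)
    hence "orth_diam ?m = 3" using dge3 by simp
    thus ?thesis using True by simp
  next
    case False
    then obtain a0 where a0: "a0 \<in> (zero_divisors :: 'a set)"
      and nc: "\<And>a1 a2. a1 \<noteq> 0 \<Longrightarrow> a2 \<noteq> 0 \<Longrightarrow> a0 * a1 = 0 \<Longrightarrow> a0 * a2 = 0 \<Longrightarrow> a1 * a2 = 0 \<Longrightarrow> False"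
      unfolding condZ_def by blast
    have AV': "(Ad i a0 :: 'a^'n^'n) \<in> ?V" by (rule Ad_vert[OF ij a0 nontriv])
    have BV': "(Bd i j a0 :: 'a^'n^'n) \<in> ?V" by (rule Bd_vert[OF ij a0 nontriv])
    have "enat 4 \<le> orth_dist ?m (Ad i a0) (Bd i j a0)" by (rule dist_AB4[OF ij nontriv nc])
    hence "4 \<le> orth_dist ?m (Ad i a0) (Bd i j a0)" by (simp add: numeral_eq_enat)
    hence "4 \<le> orth_diam ?m" unfolding orth_diam_def by (intro SUP_upper2[OF AV'] SUP_upper2[OF BV'])
    hence "orth_diam ?m = 4" using dle4 by simp
    thus ?thesis using False by simp
  qed
  have sc: "\<forall>A \<in> ?V. \<exists>b::'a. mat b \<in> ?V \<and> orth_dist ?m A (mat b) \<le> 2"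
  proof
    fix A assume A: "A \<in> ?V"
    obtain b where b: "(mat b :: 'a^'n^'n) \<in> ?V" "reach ?m A (mat b) (Suc (Suc 0))"
      using scalar_claim[OF z(2) w(1) w(2) A] by blast
    have "orth_dist ?m A (mat b) \<le> 2" using reach_dist[OF b(2)] by (simp add: numeral_eq_enat numeral_2_eq_2)
    thus "\<exists>b::'a. mat b \<in> ?V \<and> orth_dist ?m A (mat b) \<le> 2" using b(1) by blast
  qed
  show ?thesis using conn diam ceq sc by blast
qed

end
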